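(* Let $\widehat Q^{(1)}_{n,m},\dots,\widehat Q^{(m)}_{n,m}$ be the subset-based variational posteriors computed on disjoint groups $G_1,\dots,G_m$; they are independent random probability measures on $\Theta$. Let $0\le\kappa<1/3$. Suppose $\epsilon>0$ is such that for every $j$ with $1\le j\le\lfloor(1-\kappa)m\rfloor+1$, \[ \Pr\big(d_{W_{1,\rho}}(\widehat Q^{(j)}_{n,m},\delta_0)>\epsilon\big)\le\tfrac14 . \] Here the indices $1,\dots,\lfloor(1-\kappa)m\rfloor+1$ label uncontaminated groups; the other groups are arbitrary. Then the Wasserstein metric median $Q^*_{\mathrm{Met}}$ satisfies \[ \Pr\big(d_{W_{1,\rho}}(Q^*_{\mathrm{Met}},\delta_0)>3\epsilon\big)\le\Big[e^{(1-\kappa)\psi\left(\frac{1/2-\kappa}{1-\kappa},\frac14\right)}\Big]^{-m}. \]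
   Context: $\Theta$ carries the Hellinger metric $\rho(\theta_1,\theta_2)=h(P_{\theta_1},P_{\theta_2})$, and $\delta_0$ is the Dirac measure at $\theta_0$. The distance \[ d_{W_{1,\rho}}(\mu_1,\mu_2)=\inf_{\gamma}\int\rho(x,y)\,d\gamma(x,y) \] is the 1-Wasserstein distance with respect to $\rho$, the infimum running over couplings $\gamma$ of $\mu_1,\mu_2$. The subset-based variational posterior is $\widehat Q^{(j)}_{n,m}=\arg\min_{Q\in\mathcal Q}\mathrm{KL}(Q,\Pi_{n,m}(\cdot\mid G_j))$, where \[ \Pi_{n,m}(B\mid G_j)\propto\int_B\Big(\prod_{i\in G_j}p_\theta(X_i)\Big)^m d\Pi(\theta). \] Wasserstein metric median: let \[ \varepsilon_*=\inf\Big\{\varepsilon>0:\ \exists\, j\in\{1,\dots,m\},\ I(j)\subset\{1,\dots,m\}\text{ with } |I(j)|>\tfrac m2 \text{ and } d_{W_{1,\rho}}(\widehat Q^{(i)}_{n,m},\widehat Q^{(j)}_{n,m})\le2\varepsilon\ \ \forall i\in I(j)\Big\}, \] let $j_*$ be a corresponding index (ties broken arbitrarily), and set $Q^*_{\mathrm{Met}}=\widehat Q^{(j_* )}_{n,m}$. Define $\psi(\alpha,q)=(1-\alpha)\log\frac{1-\alpha}{1-q}+\alpha\log\frac{\alpha}{q}$. *)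

theory Defs
  imports "HOL-Probability.Probability"
begin

definition hellinger :: "'x measure \<Rightarrow> ('t \<Rightarrow> 'x \<Rightarrow> real) \<Rightarrow> 't \<Rightarrow> 't \<Rightarrow> real" where
  "hellinger nu p t1 t2 =
     sqrt ((1/2) * (\<integral>x. (sqrt (p t1 x) - sqrt (p t2 x))^2 \<partial>nu))"

definition couplings :: "'t measure \<Rightarrow> 't measure \<Rightarrow> 't measure \<Rightarrow> ('t \<times> 't) measure set" where
  "couplings T mu1 mu2 =
     {g. sets g = sets (T \<Otimes>\<^sub>M T) \<and> distr g T fst = mu1 \<and> distr g T snd = mu2}"

definition wasserstein1 :: "('t \<Rightarrow> 't \<Rightarrow> real) \<Rightarrow> 't measure \<Rightarrow> 't measure \<Rightarrow> 't measure \<Rightarrow> ennreal" where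
  "wasserstein1 rho T mu1 mu2 =
     (INF g \<in> couplings T mu1 mu2. \<integral>\<^sup>+ z. ennreal (rho (fst z) (snd z)) \<partial>g)"

definition eps_star :: "('m \<Rightarrow> 'm \<Rightarrow> ennreal) \<Rightarrow> (nat \<Rightarrow> 'm) \<Rightarrow> nat \<Rightarrow> real" where
  "eps_star d q m = Inf {eps. eps > 0 \<and>
      (\<exists>j\<in>{1..m}. \<exists>I. I \<subseteq> {1..m} \<and> real (card I) > real m / 2 \<and>
          (\<forall>i\<in>I. d (q i) (q j) \<le> ennreal (2 * eps)))}"

definition metric_median_index :: "('m \<Rightarrow> 'm \<Rightarrow> ennreal) \<Rightarrow> (nat \<Rightarrow> 'm) \<Rightarrow> nat \<Rightarrow> nat \<Rightarrow> bool" where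
  "metric_median_index d q m j \<longleftrightarrow> j \<in> {1..m} \<and>
      (\<exists>I. I \<subseteq> {1..m} \<and> real (card I) > real m / 2 \<and>
          (\<forall>i\<in>I. d (q i) (q j) \<le> ennreal (2 * eps_star d q m)))"

definition psi :: "real \<Rightarrow> real \<Rightarrow> real" where
  "psi a q = (1 - a) * ln ((1 - a) / (1 - q)) + a * ln (a / q)"

text \<open>Outer probability (the event for the metric median need not be measurable,
  since ties are broken arbitrarily).\<close>
definition outer_prob :: "'a measure \<Rightarrow> 'a set \<Rightarrow> real" where
  "outer_prob M S = (INF A \<in> {A \<in> sets M. S \<inter> space M \<subseteq> A}. measure M A)"

end

theory Submission
  imports Defs
begin

lemma cs_aux:
  fixes A B C :: real
  assumes A: "A \<ge> 0" and C: "C \<ge> 0" and H: "\<And>s. s > 0 \<Longrightarrow> B \<le> (s * A + C / s) / 2"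
  shows "B \<le> sqrt A * sqrt C"
proof (cases "A > 0 \<and> C > 0")
  case True
  define s where "s = sqrt C / sqrt A"
  have sp: "s > 0" using True by (simp add: s_def)
  have sA: "sqrt A > 0" "sqrt C > 0" using True by auto
  have AA: "A = sqrt A * sqrt A" "C = sqrt C * sqrt C" using A C by simp_all
  have "s * A = sqrt A * sqrt C"
    unfolding s_def by (subst AA(1)) (use sA in \<open>simp add: field_simps\<close>)
  moreover have "C / s = sqrt A * sqrt C"
    unfolding s_def by (subst AA(2)) (use sA in \<open>simp add: field_simps\<close>)
  ultimately show ?thesis using H[OF sp] by simp
next
  case False
  then have z: "A = 0 \<or> C = 0" using A C by auto
  show ?thesis
  proof (rule ccontr)
    assume "\<not> ?thesis"
    then have Bp: "B > 0" using z by auto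
    show False
    proof (cases "A = 0")
      case True
      define s where "s = C / B + 1"
      have sp: "s > 0" using Bp C unfolding s_def by (simp add: add_nonneg_pos)
      have b1: "B \<le> C / s / 2" using H[OF sp] True by simp
      have b2: "C / s \<le> B"
      proof -
        have "C \<le> B * s" using Bp unfolding s_def by (simp add: field_simps)
        then show ?thesis using sp by (simp add: divide_le_eq mult.commute)
      qed
      have "C / s / 2 \<le> B / 2" using b2 by (simp add: divide_right_mono)
      then show False using b1 Bp by linarith
    next
      case False
      then have C0: "C = 0" using z by simp
      define s where "s = B / A / 4"
      have Ap: "A > 0" using A False by simp
      have sp: "s > 0" using Bp Ap unfolding s_def by simp
      have "B \<le> s * A / 2" using H[OF sp] C0 by simp
      also have "s * A / 2 = B / 8" using Ap unfolding s_def by simp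
      finally show False using Bp by simp
    qed
  qed
qed

definition Hd :: "'x measure \<Rightarrow> ('x \<Rightarrow> real) \<Rightarrow> ('x \<Rightarrow> real) \<Rightarrow> real" where
  "Hd nu f g = sqrt ((1/2) * (\<integral>x. (sqrt (f x) - sqrt (g x))^2 \<partial>nu))"

lemma sq_int:
  fixes f g :: "'x \<Rightarrow> real"
  assumes [measurable]: "f \<in> borel_measurable nu" "g \<in> borel_measurable nu"
    and "\<And>x. x \<in> space nu \<Longrightarrow> 0 \<le> f x" "\<And>x. x \<in> space nu \<Longrightarrow> 0 \<le> g x"
    and "integrable nu f" "integrable nu g"
  shows "integrable nu (\<lambda>x. (sqrt (f x) - sqrt (g x))^2)"
proof (rule Bochner_Integration.integrable_bound[where f="\<lambda>x. f x + g x"])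
  show "integrable nu (\<lambda>x. f x + g x)" using assms by simp
  show "AE x in nu. norm ((sqrt (f x) - sqrt (g x))^2) \<le> norm (f x + g x)"
  proof (rule AE_I2)
    fix x assume x: "x \<in> space nu"
    have f0: "f x \<ge> 0" and g0: "g x \<ge> 0" using assms x by auto
    have "(sqrt (f x) - sqrt (g x))^2 = f x + g x - 2 * sqrt (f x) * sqrt (g x)"
      using f0 g0 by (simp add: power2_diff)
    also have "\<dots> \<le> f x + g x" using f0 g0 by simp
    finally show "norm ((sqrt (f x) - sqrt (g x))^2) \<le> norm (f x + g x)" using f0 g0 by simp
  qed
qed measurable

lemma Hd_tri:
  fixes f g h :: "'x \<Rightarrow> real"
  assumes [measurable]: "f \<in> borel_measurable nu" "g \<in> borel_measurable nu" "h \<in> borel_measurable nu"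
    and nn: "\<And>x. x \<in> space nu \<Longrightarrow> 0 \<le> f x" "\<And>x. x \<in> space nu \<Longrightarrow> 0 \<le> g x" "\<And>x. x \<in> space nu \<Longrightarrow> 0 \<le> h x"
    and ii: "integrable nu f" "integrable nu g" "integrable nu h"
  shows "Hd nu f h \<le> Hd nu f g + Hd nu g h"
proof -
  define u where "u x = sqrt (f x) - sqrt (g x)" for x
  define v where "v x = sqrt (g x) - sqrt (h x)" for x
  have [measurable]: "u \<in> borel_measurable nu" "v \<in> borel_measurable nu" unfolding u_def v_def by measurable
  have iu: "integrable nu (\<lambda>x. (u x)^2)" unfolding u_def by (rule sq_int) (use assms in auto)
  have iv: "integrable nu (\<lambda>x. (v x)^2)" unfolding v_def by (rule sq_int) (use assms in auto)
  have iuv: "integrable nu (\<lambda>x. u x * v x)"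
  proof (rule Bochner_Integration.integrable_bound[where f="\<lambda>x. (u x)^2 + (v x)^2"])
    show "integrable nu (\<lambda>x. (u x)^2 + (v x)^2)" using iu iv by simp
    show "AE x in nu. norm (u x * v x) \<le> norm ((u x)^2 + (v x)^2)"
    proof (rule AE_I2)
      fix x
      have h0: "0 \<le> (\<bar>u x\<bar> - \<bar>v x\<bar>)^2" by simp
      have "(\<bar>u x\<bar> - \<bar>v x\<bar>)^2 = (u x)^2 + (v x)^2 - 2 * \<bar>u x * v x\<bar>"
        by (simp add: power2_diff abs_mult)
      then have "2 * \<bar>u x * v x\<bar> \<le> (u x)^2 + (v x)^2" using h0 by linarith
      then have "\<bar>u x * v x\<bar> \<le> (u x)^2 + (v x)^2" by simp
      then show "norm (u x * v x) \<le> norm ((u x)^2 + (v x)^2)" by simp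
    qed
  qed measurable
  define A where "A = (\<integral>x. (u x)^2 \<partial>nu)"
  define B where "B = (\<integral>x. u x * v x \<partial>nu)"
  define C where "C = (\<integral>x. (v x)^2 \<partial>nu)"
  have A0: "A \<ge> 0" unfolding A_def by simp
  have C0: "C \<ge> 0" unfolding C_def by simp
  have BB: "B \<le> (s * A + C / s) / 2" if s: "s > 0" for s
  proof -
    have "B \<le> (\<integral>x. (s * (u x)^2 + (v x)^2 / s) / 2 \<partial>nu)"
      unfolding B_def
    proof (rule integral_mono)
      show "integrable nu (\<lambda>x. (s * (u x)^2 + (v x)^2 / s) / 2)" using iu iv by simp
      fix x
      have "0 \<le> (s * u x - v x)^2 / s" using s by simp
      also have "(s * u x - v x)^2 / s = s * (u x)^2 + (v x)^2 / s - 2 * (u x * v x)"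
        using s by (simp add: power2_diff field_simps power2_eq_square)
      finally show "u x * v x \<le> (s * (u x)^2 + (v x)^2 / s) / 2" by simp
    qed (use iuv in auto)
    also have "\<dots> = (s * A + C / s) / 2" unfolding A_def C_def using iu iv by simp
    finally show ?thesis .
  qed
  have BC: "B \<le> sqrt A * sqrt C" by (rule cs_aux[OF A0 C0 BB])
  have eq: "(\<lambda>x. (sqrt (f x) - sqrt (h x))^2) = (\<lambda>x. (u x)^2 + 2 * (u x * v x) + (v x)^2)"
    unfolding u_def v_def by (rule ext) (simp add: power2_eq_square algebra_simps)
  have "(\<integral>x. (sqrt (f x) - sqrt (h x))^2 \<partial>nu) = A + 2 * B + C"
    unfolding eq A_def B_def C_def using iu iv iuv by simp
  also have "\<dots> \<le> (sqrt A + sqrt C)^2" using BC A0 C0 by (simp add: power2_sum)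
  finally have le: "(1/2) * (\<integral>x. (sqrt (f x) - sqrt (h x))^2 \<partial>nu) \<le> (sqrt (A/2) + sqrt (C/2))^2"
    using A0 C0 by (simp add: power2_sum real_sqrt_divide power_divide)
  have "Hd nu f h \<le> sqrt ((sqrt (A/2) + sqrt (C/2))^2)"
    unfolding Hd_def using le real_sqrt_le_mono by blast
  also have "\<dots> = sqrt (A/2) + sqrt (C/2)" using A0 C0 by simp
  also have "\<dots> = Hd nu f g + Hd nu g h" unfolding Hd_def A_def C_def u_def v_def by simp
  finally show ?thesis .
qed


locale hs =
  fixes T :: "'t measure" and nu :: "'x measure" and p :: "'t \<Rightarrow> 'x \<Rightarrow> real" and t0 :: 't
  assumes model_meas: "(\<lambda>(t, x). p t x) \<in> borel_measurable (T \<Otimes>\<^sub>M nu)"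
    and sf: "sigma_finite_measure nu"
    and dens_nonneg: "\<And>t x. t \<in> space T \<Longrightarrow> x \<in> space nu \<Longrightarrow> 0 \<le> p t x"
    and dens_one: "\<And>t. t \<in> space T \<Longrightarrow> (\<integral>\<^sup>+ x. ennreal (p t x) \<partial>nu) = 1"
    and t0: "t0 \<in> space T"
begin

abbreviation "h \<equiv> hellinger nu p"

lemma p_meas: assumes t: "t \<in> space T" shows "p t \<in> borel_measurable nu"
proof -
  have "(\<lambda>x. (\<lambda>(t, x). p t x) (Pair t x)) \<in> borel_measurable nu"
    by (rule measurable_compose[OF measurable_Pair1'[OF t] model_meas])
  then show ?thesis by simp
qed

lemma p_int: assumes t: "t \<in> space T" shows "integrable nu (p t)"
  by (rule integrableI_nn_integral_finite[OF p_meas[OF t] _ dens_one[OF t, folded ennreal_1]])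
     (use dens_nonneg t in auto)

lemma h_tri: "a \<in> space T \<Longrightarrow> b \<in> space T \<Longrightarrow> c \<in> space T \<Longrightarrow> h a c \<le> h a b + h b c"
  unfolding hellinger_def Hd_def[symmetric]
  by (rule Hd_tri) (auto intro: p_meas p_int dens_nonneg)

lemma h_sym: "h a b = h b a"
  unfolding hellinger_def by (simp add: power2_commute)

lemma h_refl: "h a a = 0"
  unfolding hellinger_def by simp

lemma h_nonneg: "h a b \<ge> 0"
  unfolding hellinger_def by simp

lemma h_meas: "(\<lambda>z. h (fst z) (snd z)) \<in> borel_measurable (T \<Otimes>\<^sub>M T)"
proof -
  have m1: "(\<lambda>y. (\<lambda>(t, x). p t x) ((\<lambda>y. (fst (fst y), snd y)) y)) \<in> borel_measurable ((T \<Otimes>\<^sub>M T) \<Otimes>\<^sub>M nu)"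
    by (rule measurable_compose[OF _ model_meas]) measurable
  have m2: "(\<lambda>y. (\<lambda>(t, x). p t x) ((\<lambda>y. (snd (fst y), snd y)) y)) \<in> borel_measurable ((T \<Otimes>\<^sub>M T) \<Otimes>\<^sub>M nu)"
    by (rule measurable_compose[OF _ model_meas]) measurable
  have [measurable]: "(\<lambda>y. p (fst (fst y)) (snd y)) \<in> borel_measurable ((T \<Otimes>\<^sub>M T) \<Otimes>\<^sub>M nu)"
    "(\<lambda>y. p (snd (fst y)) (snd y)) \<in> borel_measurable ((T \<Otimes>\<^sub>M T) \<Otimes>\<^sub>M nu)"
    using m1 m2 by simp_all
  have "case_prod (\<lambda>z x. (sqrt (p (fst z) x) - sqrt (p (snd z) x))^2) \<in> borel_measurable ((T \<Otimes>\<^sub>M T) \<Otimes>\<^sub>M nu)"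
    unfolding split_beta' by measurable
  then have "(\<lambda>z. \<integral>x. (sqrt (p (fst z) x) - sqrt (p (snd z) x))^2 \<partial>nu) \<in> borel_measurable (T \<Otimes>\<^sub>M T)"
    by (rule sigma_finite_measure.borel_measurable_lebesgue_integral[OF sf])
  then show ?thesis unfolding hellinger_def by measurable
qed

lemma h_meas_left: "b \<in> space T \<Longrightarrow> (\<lambda>a. h a b) \<in> borel_measurable T"
  using measurable_compose[OF measurable_Pair2'[of b T T] h_meas] by simp

definition F :: "'t measure \<Rightarrow> ennreal" where
  "F mu = (\<integral>\<^sup>+ t. ennreal (h t t0) \<partial>mu)"

lemma F_meas: "F \<in> borel_measurable (prob_algebra T)"
  unfolding F_def
  by (rule measurable_compose[OF measurable_prob_algebraD[OF measurable_ident_sets[OF refl]]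
        nn_integral_measurable_subprob_algebra]) (use h_meas_left[OF t0] in measurable)

lemma coup_meas:
  assumes g: "g \<in> couplings T mu1 mu2" and f: "f \<in> borel_measurable (T \<Otimes>\<^sub>M T)"
  shows "f \<in> borel_measurable g"
proof -
  have s: "sets g = sets (T \<Otimes>\<^sub>M T)" using g by (simp add: couplings_def)
  show ?thesis by (subst measurable_cong_sets[OF s refl]) (rule f)
qed

lemma coup_fst:
  assumes g: "g \<in> couplings T mu1 mu2" and f: "f \<in> borel_measurable T"
  shows "(\<integral>\<^sup>+ z. f (fst z) \<partial>g) = (\<integral>\<^sup>+ t. f t \<partial>mu1)"
proof -
  have s: "sets g = sets (T \<Otimes>\<^sub>M T)" using g by (simp add: couplings_def)
  have fm: "fst \<in> measurable g T" by (subst measurable_cong_sets[OF s refl]) simp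
  have "mu1 = distr g T fst" using g unfolding couplings_def by simp
  then show ?thesis using nn_integral_distr[OF fm, of f] f by simp
qed

lemma coup_snd:
  assumes g: "g \<in> couplings T mu1 mu2" and f: "f \<in> borel_measurable T"
  shows "(\<integral>\<^sup>+ z. f (snd z) \<partial>g) = (\<integral>\<^sup>+ t. f t \<partial>mu2)"
proof -
  have s: "sets g = sets (T \<Otimes>\<^sub>M T)" using g by (simp add: couplings_def)
  have fm: "snd \<in> measurable g T" by (subst measurable_cong_sets[OF s refl]) simp
  have "mu2 = distr g T snd" using g unfolding couplings_def by simp
  then show ?thesis using nn_integral_distr[OF fm, of f] f by simp
qed

lemma space_coup: "g \<in> couplings T mu1 mu2 \<Longrightarrow> space g = space T \<times> space T"
  unfolding couplings_def by (auto dest!: sets_eq_imp_space_eq simp: space_pair_measure)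

lemma prod_coupling:
  assumes m1: "mu1 \<in> space (prob_algebra T)" and m2: "mu2 \<in> space (prob_algebra T)"
  shows "mu1 \<Otimes>\<^sub>M mu2 \<in> couplings T mu1 mu2"
proof -
  have s1: "sets mu1 = sets T" and p1: "prob_space mu1" using m1 by (auto simp: space_prob_algebra)
  have s2: "sets mu2 = sets T" and p2: "prob_space mu2" using m2 by (auto simp: space_prob_algebra)
  interpret P: pair_prob_space mu1 mu2 using p1 p2 by (simp add: pair_prob_space_def pair_sigma_finite_def prob_space_imp_sigma_finite)
  have ss: "sets (mu1 \<Otimes>\<^sub>M mu2) = sets (T \<Otimes>\<^sub>M T)" by (rule sets_pair_measure_cong[OF s1 s2])
  have d1: "distr (mu1 \<Otimes>\<^sub>M mu2) T fst = mu1"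
  proof -
    have "distr (mu1 \<Otimes>\<^sub>M mu2) T fst = distr (mu1 \<Otimes>\<^sub>M mu2) mu1 fst"
      by (rule distr_cong) (simp_all add: s1)
    also have "\<dots> = mu1" by (rule prob_space.distr_pair_fst[OF p2])
    finally show ?thesis .
  qed
  have d2: "distr (mu1 \<Otimes>\<^sub>M mu2) T snd = mu2"
  proof (rule measure_eqI)
    show "sets (distr (mu1 \<Otimes>\<^sub>M mu2) T snd) = sets mu2" using s2 by simp
    fix A assume "A \<in> sets (distr (mu1 \<Otimes>\<^sub>M mu2) T snd)"
    then have A: "A \<in> sets mu2" using s2 by simp
    have sm: "snd \<in> measurable (mu1 \<Otimes>\<^sub>M mu2) T"
      by (subst measurable_cong_sets[OF refl s2[symmetric]]) simp
    have "emeasure (distr (mu1 \<Otimes>\<^sub>M mu2) T snd) A = emeasure (mu1 \<Otimes>\<^sub>M mu2) (snd -` A \<inter> space (mu1 \<Otimes>\<^sub>M mu2))"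
      using A s2 by (simp add: emeasure_distr[OF sm])
    also have "snd -` A \<inter> space (mu1 \<Otimes>\<^sub>M mu2) = space mu1 \<times> A"
      using sets.sets_into_space[OF A] by (auto simp: space_pair_measure)
    also have "emeasure (mu1 \<Otimes>\<^sub>M mu2) (space mu1 \<times> A) = emeasure mu1 (space mu1) * emeasure mu2 A"
      by (rule P.M2.emeasure_pair_measure_Times) (simp_all add: A)
    also have "\<dots> = emeasure mu2 A" using p1 by (simp add: prob_space.emeasure_space_1)
    finally show "emeasure (distr (mu1 \<Otimes>\<^sub>M mu2) T snd) A = emeasure mu2 A" .
  qed
  show ?thesis unfolding couplings_def using ss d1 d2 by simp
qed

end


context hs begin

lemma coup_sets: "g \<in> couplings T mu1 mu2 \<Longrightarrow> sets g = sets (T \<Otimes>\<^sub>M T)"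
  by (simp add: couplings_def)

lemma m0: "(\<lambda>a. ennreal (h a t0)) \<in> borel_measurable T"
  by (rule measurable_compose[OF h_meas_left[OF t0] measurable_ennreal])

lemma hm_enn: "(\<lambda>z. ennreal (h (fst z) (snd z))) \<in> borel_measurable (T \<Otimes>\<^sub>M T)"
  by (rule measurable_compose[OF h_meas measurable_ennreal])

lemma hm_fst: "(\<lambda>z. ennreal (h (fst z) t0)) \<in> borel_measurable (T \<Otimes>\<^sub>M T)"
  by (rule measurable_compose[OF measurable_fst m0])

lemma hm_snd: "(\<lambda>z. ennreal (h (snd z) t0)) \<in> borel_measurable (T \<Otimes>\<^sub>M T)"
  by (rule measurable_compose[OF measurable_snd m0])

lemma enn_tri: "x \<le> h c d + h e f \<Longrightarrow> ennreal x \<le> ennreal (h c d) + ennreal (h e f)"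
proof -
  assume "x \<le> h c d + h e f"
  then have "ennreal x \<le> ennreal (h c d + h e f)" by (rule ennreal_leI)
  also have "\<dots> = ennreal (h c d) + ennreal (h e f)" by (rule ennreal_plus) (rule h_nonneg)+
  finally show ?thesis .
qed

lemma F_tri:
  assumes g: "g \<in> couplings T mu1 mu2"
  shows "F mu2 \<le> (\<integral>\<^sup>+ z. ennreal (h (fst z) (snd z)) \<partial>g) + F mu1"
proof -
  have F2: "F mu2 = (\<integral>\<^sup>+ z. ennreal (h (snd z) t0) \<partial>g)"
    unfolding F_def by (rule coup_snd[OF g m0, symmetric])
  have F1: "F mu1 = (\<integral>\<^sup>+ z. ennreal (h (fst z) t0) \<partial>g)"
    unfolding F_def by (rule coup_fst[OF g m0, symmetric])
  have mA: "(\<lambda>z. ennreal (h (fst z) (snd z))) \<in> borel_measurable g"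
    by (rule coup_meas[OF g]) (rule hm_enn)
  have mB: "(\<lambda>z. ennreal (h (fst z) t0)) \<in> borel_measurable g"
    by (rule coup_meas[OF g]) (rule hm_fst hm_snd)
  have "F mu2 \<le> (\<integral>\<^sup>+ z. ennreal (h (fst z) (snd z)) + ennreal (h (fst z) t0) \<partial>g)"
    unfolding F2
  proof (rule nn_integral_mono)
    fix z assume "z \<in> space g"
    then have "z \<in> space T \<times> space T" using space_coup[OF g] by (simp only:)
    then have "fst z \<in> space T \<and> snd z \<in> space T" by (simp only: mem_Times_iff)
    then have z: "fst z \<in> space T" "snd z \<in> space T" by simp_all
    have "h (snd z) t0 \<le> h (snd z) (fst z) + h (fst z) t0" by (rule h_tri[OF z(2) z(1) t0])
    then have "h (snd z) t0 \<le> h (fst z) (snd z) + h (fst z) t0" using h_sym[of "snd z" "fst z"] by simp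
    then show "ennreal (h (snd z) t0) \<le> ennreal (h (fst z) (snd z)) + ennreal (h (fst z) t0)"
      by (rule enn_tri)
  qed
  also have "\<dots> = (\<integral>\<^sup>+ z. ennreal (h (fst z) (snd z)) \<partial>g) + F mu1"
    unfolding F1 by (rule nn_integral_add[OF mA mB])
  finally show ?thesis .
qed

lemma F_tri2:
  assumes g: "g \<in> couplings T mu1 mu2"
  shows "F mu1 \<le> (\<integral>\<^sup>+ z. ennreal (h (fst z) (snd z)) \<partial>g) + F mu2"
proof -
  have F2: "F mu2 = (\<integral>\<^sup>+ z. ennreal (h (snd z) t0) \<partial>g)"
    unfolding F_def by (rule coup_snd[OF g m0, symmetric])
  have F1: "F mu1 = (\<integral>\<^sup>+ z. ennreal (h (fst z) t0) \<partial>g)"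
    unfolding F_def by (rule coup_fst[OF g m0, symmetric])
  have mA: "(\<lambda>z. ennreal (h (fst z) (snd z))) \<in> borel_measurable g"
    by (rule coup_meas[OF g]) (rule hm_enn)
  have mB: "(\<lambda>z. ennreal (h (snd z) t0)) \<in> borel_measurable g"
    by (rule coup_meas[OF g]) (rule hm_fst hm_snd)
  have "F mu1 \<le> (\<integral>\<^sup>+ z. ennreal (h (fst z) (snd z)) + ennreal (h (snd z) t0) \<partial>g)"
    unfolding F1
  proof (rule nn_integral_mono)
    fix z assume "z \<in> space g"
    then have "z \<in> space T \<times> space T" using space_coup[OF g] by (simp only:)
    then have "fst z \<in> space T \<and> snd z \<in> space T" by (simp only: mem_Times_iff)
    then have z: "fst z \<in> space T" "snd z \<in> space T" by simp_all
    have "h (fst z) t0 \<le> h (fst z) (snd z) + h (snd z) t0" by (rule h_tri[OF z(1) z(2) t0])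
    then show "ennreal (h (fst z) t0) \<le> ennreal (h (fst z) (snd z)) + ennreal (h (snd z) t0)"
      by (rule enn_tri)
  qed
  also have "\<dots> = (\<integral>\<^sup>+ z. ennreal (h (fst z) (snd z)) \<partial>g) + F mu2"
    unfolding F2 by (rule nn_integral_add[OF mA mB])
  finally show ?thesis .
qed

lemma h_meas_right: "a \<in> space T \<Longrightarrow> (\<lambda>b. h a b) \<in> borel_measurable T"
  using measurable_compose[OF measurable_Pair1'[of a T T] h_meas] by simp

lemma ret_pa: "return T t0 \<in> space (prob_algebra T)"
  using t0 by (simp add: space_prob_algebra prob_space_return)

lemma F_ret: "F (return T t0) = 0"
proof -
  have "F (return T t0) = ennreal (h t0 t0)"
    unfolding F_def by (rule nn_integral_return[OF t0 m0])
  then show ?thesis by (simp add: h_refl)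
qed

lemma W_dirac:
  assumes mu: "mu \<in> space (prob_algebra T)"
  shows "wasserstein1 h T mu (return T t0) = F mu"
proof (rule antisym)
  have smu0: "sets mu = sets T" using mu by (simp add: space_prob_algebra)
  have smu: "sets mu = sets T" "space mu = space T" using smu0 sets_eq_imp_space_eq[OF smu0] by simp_all
  interpret R: prob_space "return T t0" using t0 by (rule prob_space_return)
  have ss: "sets (mu \<Otimes>\<^sub>M return T t0) = sets (T \<Otimes>\<^sub>M T)" by (rule sets_pair_measure_cong) (simp_all add: smu)
  have fm: "(\<lambda>z. ennreal (h (fst z) (snd z))) \<in> borel_measurable (mu \<Otimes>\<^sub>M return T t0)"
    by (subst measurable_cong_sets[OF ss refl]) (rule hm_enn)
  have "(\<integral>\<^sup>+ z. ennreal (h (fst z) (snd z)) \<partial>(mu \<Otimes>\<^sub>M return T t0))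
      = (\<integral>\<^sup>+ x. \<integral>\<^sup>+ y. ennreal (h (fst (x, y)) (snd (x, y))) \<partial>return T t0 \<partial>mu)"
    by (rule R.nn_integral_fst[OF fm, symmetric])
  also have "\<dots> = (\<integral>\<^sup>+ x. ennreal (h x t0) \<partial>mu)"
  proof (rule nn_integral_cong)
    fix x assume "x \<in> space mu"
    then have x: "x \<in> space T" using smu by simp
    show "(\<integral>\<^sup>+ y. ennreal (h (fst (x, y)) (snd (x, y))) \<partial>return T t0) = ennreal (h x t0)"
      by simp (rule nn_integral_return[OF t0 measurable_compose[OF h_meas_right[OF x] measurable_ennreal]])
  qed
  finally have eq: "(\<integral>\<^sup>+ z. ennreal (h (fst z) (snd z)) \<partial>(mu \<Otimes>\<^sub>M return T t0)) = F mu"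
    unfolding F_def .
  show "wasserstein1 h T mu (return T t0) \<le> F mu"
    unfolding wasserstein1_def by (rule INF_lower2[OF prod_coupling[OF mu ret_pa]]) (simp add: eq)
  show "F mu \<le> wasserstein1 h T mu (return T t0)"
    unfolding wasserstein1_def
  proof (rule INF_greatest)
    fix g assume "g \<in> couplings T mu (return T t0)"
    from F_tri2[OF this] show "F mu \<le> (\<integral>\<^sup>+ z. ennreal (h (fst z) (snd z)) \<partial>g)" by (simp add: F_ret)
  qed
qed

lemma W_prod:
  assumes m1: "mu1 \<in> space (prob_algebra T)" and m2: "mu2 \<in> space (prob_algebra T)"
  shows "wasserstein1 h T mu1 mu2 \<le> F mu1 + F mu2"
proof -
  note g = prod_coupling[OF m1 m2]
  have mB: "(\<lambda>z. ennreal (h (fst z) t0)) \<in> borel_measurable (mu1 \<Otimes>\<^sub>M mu2)"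
    by (rule coup_meas[OF g]) (rule hm_fst hm_snd)
  have mC: "(\<lambda>z. ennreal (h (snd z) t0)) \<in> borel_measurable (mu1 \<Otimes>\<^sub>M mu2)"
    by (rule coup_meas[OF g]) (rule hm_fst hm_snd)
  have "(\<integral>\<^sup>+ z. ennreal (h (fst z) (snd z)) \<partial>(mu1 \<Otimes>\<^sub>M mu2))
      \<le> (\<integral>\<^sup>+ z. ennreal (h (fst z) t0) + ennreal (h (snd z) t0) \<partial>(mu1 \<Otimes>\<^sub>M mu2))"
  proof (rule nn_integral_mono)
    fix z assume "z \<in> space (mu1 \<Otimes>\<^sub>M mu2)"
    then have "z \<in> space T \<times> space T" using space_coup[OF g] by (simp only:)
    then have "fst z \<in> space T \<and> snd z \<in> space T" by (simp only: mem_Times_iff)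
    then have z: "fst z \<in> space T" "snd z \<in> space T" by simp_all
    have "h (fst z) (snd z) \<le> h (fst z) t0 + h t0 (snd z)" by (rule h_tri[OF z(1) t0 z(2)])
    then have "h (fst z) (snd z) \<le> h (fst z) t0 + h (snd z) t0" using h_sym[of t0 "snd z"] by simp
    then show "ennreal (h (fst z) (snd z)) \<le> ennreal (h (fst z) t0) + ennreal (h (snd z) t0)"
      by (rule enn_tri)
  qed
  also have "\<dots> = F mu1 + F mu2"
    unfolding F_def by (simp add: nn_integral_add[OF mB mC] coup_fst[OF g m0] coup_snd[OF g m0])
  finally show ?thesis
    unfolding wasserstein1_def by (rule INF_lower2[OF g])
qed

lemma W_tri:
  assumes m1: "mu1 \<in> space (prob_algebra T)" and m2: "mu2 \<in> space (prob_algebra T)"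
    and W: "wasserstein1 h T mu1 mu2 \<le> a" and F1: "F mu1 \<le> b" and b: "b \<noteq> top"
  shows "F mu2 \<le> a + b"
proof -
  have nt: "F mu1 \<noteq> top" using F1 b by (metis top.extremum_uniqueI)
  have "F mu2 - F mu1 \<le> wasserstein1 h T mu1 mu2"
    unfolding wasserstein1_def
  proof (rule INF_greatest)
    fix g assume g: "g \<in> couplings T mu1 mu2"
    show "F mu2 - F mu1 \<le> (\<integral>\<^sup>+ z. ennreal (h (fst z) (snd z)) \<partial>g)"
      using F_tri[OF g] nt by (simp add: ennreal_minus_le_iff add.commute)
  qed
  then have "F mu2 - F mu1 \<le> a" using W by simp
  then have "F mu2 \<le> F mu1 + a" using nt by (simp add: ennreal_minus_le_iff)
  also have "\<dots> \<le> b + a" using F1 by (simp add: add_right_mono)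
  finally show ?thesis by (simp add: add.commute)
qed

end


lemma chernoff_arith:
  fixes \<kappa> :: real and m n :: nat
  assumes k0: "0 \<le> \<kappa>" and k1: "\<kappa> < 1/3" and nc: "(1 - \<kappa>) * real m \<le> real n"
  defines "\<alpha> \<equiv> (1/2 - \<kappa>) / (1 - \<kappa>)"
  defines "r \<equiv> 3 * \<alpha> / (1 - \<alpha>)"
  shows "r powr (- (real n - real m / 2)) * (1 + (r - 1) / 4) ^ n
         \<le> (exp ((1 - \<kappa>) * psi \<alpha> (1/4))) powr (- real m)"
proof -
  have kp: "1 - \<kappa> > 0" using k1 by simp
  have hk: "\<alpha> * (1 - \<kappa>) = 1/2 - \<kappa>" unfolding \<alpha>_def using kp by simp
  have a1: "\<alpha> > 1/4"
  proof -
    have "1/4 * (1 - \<kappa>) < 1/2 - \<kappa>" using k1 by simp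
    then show ?thesis unfolding \<alpha>_def using kp by (simp add: pos_less_divide_eq)
  qed
  have a2: "\<alpha> \<le> 1/2"
  proof -
    have "1/2 - \<kappa> \<le> 1/2 * (1 - \<kappa>)" using k0 by simp
    then show ?thesis unfolding \<alpha>_def using kp by (simp add: pos_divide_le_eq)
  qed
  have ap: "1 - \<alpha> > 0" using a2 by simp
  define L1 where "L1 = ln (4 * \<alpha>)"
  define L2 where "L2 = ln (4 * (1 - \<alpha>) / 3)"
  have L1p: "L1 \<ge> 0" unfolding L1_def using a1 by simp
  have rp: "r > 0" unfolding r_def using a1 ap by simp
  have rdef: "r = (4 * \<alpha>) / (4 * (1 - \<alpha>) / 3)" unfolding r_def using ap by (simp add: field_simps)
  have lnr: "ln r = L1 - L2" unfolding rdef L1_def L2_def by (rule ln_divide_pos) (use a1 ap in simp_all)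
  have qdef: "1 + (r - 1) / 4 = inverse (4 * (1 - \<alpha>) / 3)"
    unfolding r_def using ap by (simp add: field_simps)
  have qp: "1 + (r - 1) / 4 > 0" unfolding qdef using ap by simp
  have lnq: "ln (1 + (r - 1) / 4) = - L2" unfolding qdef L2_def by (rule ln_inverse)
  have psi_eq: "psi \<alpha> (1/4) = (1 - \<alpha>) * L2 + \<alpha> * L1"
  proof -
    have e1: "(1 - \<alpha>) / (1 - 1/4) = 4 * (1 - \<alpha>) / 3" by simp
    have e2: "\<alpha> / (1/4) = 4 * \<alpha>" by simp
    show ?thesis unfolding psi_def e1 e2 L1_def L2_def by simp
  qed
  define E1 where "E1 = - (real n - real m / 2) * ln r + real n * ln (1 + (r - 1) / 4)"
  define E2 where "E2 = (1 - \<kappa>) * psi \<alpha> (1/4) * (- real m)"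
  have lhs: "r powr (- (real n - real m / 2)) * (1 + (r - 1) / 4) ^ n = exp E1"
  proof -
    have "(1 + (r - 1) / 4) ^ n = exp (real n * ln (1 + (r - 1) / 4))"
      using qp by (simp add: exp_of_nat_mult)
    moreover have "r powr (- (real n - real m / 2)) = exp (- (real n - real m / 2) * ln r)"
      using rp by (simp add: powr_def)
    ultimately show ?thesis unfolding E1_def by (simp add: exp_add)
  qed
  have rhs: "(exp ((1 - \<kappa>) * psi \<alpha> (1/4))) powr (- real m) = exp E2"
    unfolding E2_def by (simp add: exp_powr_real)
  have pk: "(1 - \<kappa>) * psi \<alpha> (1/4) = (1/2) * L2 + (1/2 - \<kappa>) * L1"
  proof -
    have "(1 - \<kappa>) * psi \<alpha> (1/4) = (1 - \<kappa>) * L2 - (\<alpha> * (1 - \<kappa>)) * L2 + (\<alpha> * (1 - \<kappa>)) * L1"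
      unfolding psi_eq by (simp add: algebra_simps)
    also have "\<dots> = (1/2) * L2 + (1/2 - \<kappa>) * L1" unfolding hk by (simp add: algebra_simps)
    finally show ?thesis .
  qed
  have "E2 - E1 = L1 * (real n - (1 - \<kappa>) * real m)"
    unfolding E1_def E2_def pk lnr lnq by (simp add: field_simps)
  moreover have "L1 * (real n - (1 - \<kappa>) * real m) \<ge> 0" using L1p nc by simp
  ultimately have "E1 \<le> E2" by simp
  then show ?thesis unfolding lhs rhs by simp
qed


theorem theorem6:
  fixes M :: "'w measure" and T :: "'t measure" and nu :: "'x measure"
    and p :: "'t \<Rightarrow> 'x \<Rightarrow> real" and t0 :: 't
    and Q :: "nat \<Rightarrow> 'w \<Rightarrow> 't measure" and jstar :: "'w \<Rightarrow> nat"
    and m :: nat and \<kappa> \<epsilon> :: real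
  assumes model_meas: "(\<lambda>(t, x). p t x) \<in> borel_measurable (T \<Otimes>\<^sub>M nu)"
    and sf: "sigma_finite_measure nu"
    and dens_nonneg: "\<And>t x. t \<in> space T \<Longrightarrow> x \<in> space nu \<Longrightarrow> 0 \<le> p t x"
    and dens_one: "\<And>t. t \<in> space T \<Longrightarrow> (\<integral>\<^sup>+ x. ennreal (p t x) \<partial>nu) = 1"
    and t0: "t0 \<in> space T"
    and ps: "prob_space M"
    and indep: "prob_space.indep_vars M (\<lambda>_. prob_algebra T) Q {1..m}"
    and kappa: "0 \<le> \<kappa>" "\<kappa> < 1/3"
    and eps: "\<epsilon> > 0"
    and good: "\<And>j. j \<in> {1..m} \<Longrightarrow> j \<le> nat \<lfloor>(1 - \<kappa>) * real m\<rfloor> + 1 \<Longrightarrow>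
        measure M {w \<in> space M.
          wasserstein1 (hellinger nu p) T (Q j w) (return T t0) > ennreal \<epsilon>} \<le> 1/4"
    and median: "\<And>w. w \<in> space M \<Longrightarrow>
        metric_median_index (wasserstein1 (hellinger nu p) T) (\<lambda>j. Q j w) m (jstar w)"
  shows "outer_prob M {w \<in> space M.
           wasserstein1 (hellinger nu p) T (Q (jstar w) w) (return T t0) > ennreal (3 * \<epsilon>)}
         \<le> (exp ((1 - \<kappa>) * psi ((1/2 - \<kappa>) / (1 - \<kappa>)) (1/4))) powr (- real m)"
proof -
  interpret P: prob_space M by (rule ps)
  interpret H: hs T nu p t0 by (rule hs.intro[OF model_meas sf dens_nonneg dens_one t0])
  define d where "d = wasserstein1 (hellinger nu p) T"
  have Qm: "\<And>j. j \<in> {1..m} \<Longrightarrow> Q j \<in> M \<rightarrow>\<^sub>M prob_algebra T"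
    using indep by (simp add: P.indep_vars_def2)
  have Qs: "\<And>j w. j \<in> {1..m} \<Longrightarrow> w \<in> space M \<Longrightarrow> Q j w \<in> space (prob_algebra T)"
    by (rule measurable_space[OF Qm])
  have dd: "\<And>j w. j \<in> {1..m} \<Longrightarrow> w \<in> space M \<Longrightarrow> d (Q j w) (return T t0) = H.F (Q j w)"
    unfolding d_def using Qs H.W_dirac by blast
  have Fm: "\<And>j. j \<in> {1..m} \<Longrightarrow> (\<lambda>w. H.F (Q j w)) \<in> borel_measurable M"
    by (rule measurable_compose[OF Qm H.F_meas])
  obtain w0 where w0: "w0 \<in> space M" using P.not_empty by blast
  have m1: "m \<ge> 1" using median[OF w0] unfolding metric_median_index_def by auto

  define N where "N = nat \<lfloor>(1 - \<kappa>) * real m\<rfloor> + 1"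
  define G where "G = {j \<in> {1..m}. j \<le> N}"
  have G_sub: "G \<subseteq> {1..m}" unfolding G_def by auto
  have finG: "finite G" unfolding G_def by simp
  define n where "n = card G"
  have G_eq: "G = {1..min m N}" unfolding G_def by auto
  have n_eq: "n = min m N" unfolding n_def G_eq by simp
  have kp: "0 \<le> (1 - \<kappa>) * real m" using kappa by simp
  have nc: "(1 - \<kappa>) * real m \<le> real n"
  proof (cases "N \<le> m")
    case True
    then have "n = N" unfolding n_eq by simp
    moreover have "real N = real_of_int \<lfloor>(1 - \<kappa>) * real m\<rfloor> + 1"
      unfolding N_def using kp by simp
    moreover have "(1 - \<kappa>) * real m < real_of_int \<lfloor>(1 - \<kappa>) * real m\<rfloor> + 1" by linarith
    ultimately show ?thesis by simp
  next
    case False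
    then have "n = m" unfolding n_eq by simp
    then show ?thesis using kappa by (simp add: mult_left_le_one_le)
  qed

  define B where "B j = {w \<in> space M. ennreal \<epsilon> < H.F (Q j w)}" for j
  have Bs: "\<And>j. j \<in> {1..m} \<Longrightarrow> B j \<in> sets M"
    unfolding B_def by (rule borel_measurable_less[OF measurable_const Fm]) simp_all
  have PB: "\<And>j. j \<in> G \<Longrightarrow> P.prob (B j) \<le> 1/4"
  proof -
    fix j assume j: "j \<in> G"
    then have j1: "j \<in> {1..m}" "j \<le> N" unfolding G_def by auto
    have "B j = {w \<in> space M. wasserstein1 (hellinger nu p) T (Q j w) (return T t0) > ennreal \<epsilon>}"
      unfolding B_def using dd[OF j1(1)] unfolding d_def by auto
    then show "P.prob (B j) \<le> 1/4" using good[OF j1(1)] j1(2) unfolding N_def by simp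
  qed

  define A where "A = {w \<in> space M. real n - real m / 2 \<le> (\<Sum>j\<in>G. indicator (B j) w :: real)}"
  have summ: "(\<lambda>w. \<Sum>j\<in>G. indicator (B j) w :: real) \<in> borel_measurable M"
    by (rule borel_measurable_sum) (use Bs G_sub in auto)
  have As: "A \<in> sets M"
    unfolding A_def by (rule borel_measurable_le[OF measurable_const summ]) simp
  have sum_card: "\<And>w. (\<Sum>j\<in>G. indicator (B j) w :: real) = real (card {j \<in> G. w \<in> B j})"
  proof -
    fix w
    have "(\<Sum>j\<in>G. indicator (B j) w :: real) = (\<Sum>j\<in>G. if w \<in> B j then 1 else 0)"
      by (simp add: indicator_def of_bool_def)
    also have "\<dots> = (\<Sum>j\<in>{j \<in> G. w \<in> B j}. 1)" by (rule sum.inter_filter[OF finG, symmetric])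
    also have "\<dots> = real (card {j \<in> G. w \<in> B j})" by simp
    finally show "(\<Sum>j\<in>G. indicator (B j) w :: real) = real (card {j \<in> G. w \<in> B j})" .
  qed

  define E where "E = {w \<in> space M. d (Q (jstar w) w) (return T t0) > ennreal (3 * \<epsilon>)}"
  have EA: "E \<subseteq> A"
  proof
    fix w assume wE: "w \<in> E"
    then have w: "w \<in> space M" and bad: "d (Q (jstar w) w) (return T t0) > ennreal (3 * \<epsilon>)"
      unfolding E_def by auto
    show "w \<in> A"
    proof (rule ccontr)
      assume "w \<notin> A"
      then have lt: "real (card {j \<in> G. w \<in> B j}) < real n - real m / 2"
        unfolding A_def sum_card using w by auto
      define C where "C = {j \<in> G. w \<notin> B j}"
      have "G = C \<union> {j \<in> G. w \<in> B j}" "C \<inter> {j \<in> G. w \<in> B j} = {}" unfolding C_def by auto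
      then have "n = card C + card {j \<in> G. w \<in> B j}"
        unfolding n_def using finG by (metis card_Un_disjoint finite_Un)
      then have cC: "real (card C) > real m / 2" using lt by simp
      have finC: "finite C" unfolding C_def using finG by simp
      have C_sub: "C \<subseteq> {1..m}" unfolding C_def using G_sub by auto
      have closeC: "\<And>i. i \<in> C \<Longrightarrow> H.F (Q i w) \<le> ennreal \<epsilon>"
        unfolding C_def B_def using w by (auto simp: not_less)
      have "C \<noteq> {}" using cC by auto
      then obtain j0 where j0: "j0 \<in> C" by blast
      have pair: "\<And>i. i \<in> C \<Longrightarrow> d (Q i w) (Q j0 w) \<le> ennreal (2 * \<epsilon>)"
      proof -
        fix i assume i: "i \<in> C"
        have "d (Q i w) (Q j0 w) \<le> H.F (Q i w) + H.F (Q j0 w)"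
          unfolding d_def by (rule H.W_prod[OF Qs Qs]) (use i j0 C_sub w in auto)
        also have "\<dots> \<le> ennreal \<epsilon> + ennreal \<epsilon>" using closeC[OF i] closeC[OF j0] by (rule add_mono)
        also have "\<dots> = ennreal (2 * \<epsilon>)" using eps by (simp add: ennreal_plus[symmetric] del: ennreal_plus)
        finally show "d (Q i w) (Q j0 w) \<le> ennreal (2 * \<epsilon>)" .
      qed
      have es: "eps_star d (\<lambda>j. Q j w) m \<le> \<epsilon>"
        unfolding eps_star_def
      proof (rule cInf_lower)
        show "\<epsilon> \<in> {eps. eps > 0 \<and>
          (\<exists>j\<in>{1..m}. \<exists>I. I \<subseteq> {1..m} \<and> real (card I) > real m / 2 \<and>
            (\<forall>i\<in>I. d (Q i w) (Q j w) \<le> ennreal (2 * eps)))}"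
        proof -
          have "\<exists>j\<in>{1..m}. \<exists>I. I \<subseteq> {1..m} \<and> real (card I) > real m / 2 \<and>
            (\<forall>i\<in>I. d (Q i w) (Q j w) \<le> ennreal (2 * \<epsilon>))"
          proof (intro bexI exI conjI ballI)
            show "C \<subseteq> {1..m}" by (rule C_sub)
            show "real (card C) > real m / 2" by (rule cC)
            show "j0 \<in> {1..m}" using j0 C_sub by blast
            fix i assume "i \<in> C" then show "d (Q i w) (Q j0 w) \<le> ennreal (2 * \<epsilon>)" by (rule pair)
          qed
          then show ?thesis using eps by simp
        qed
        show "bdd_below {eps. eps > 0 \<and>
          (\<exists>j\<in>{1..m}. \<exists>I. I \<subseteq> {1..m} \<and> real (card I) > real m / 2 \<and>
            (\<forall>i\<in>I. d (Q i w) (Q j w) \<le> ennreal (2 * eps)))}"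
          by (rule bdd_belowI[where m=0]) simp
      qed
      have mw: "jstar w \<in> {1..m} \<and> (\<exists>I. I \<subseteq> {1..m} \<and> real (card I) > real m / 2 \<and>
          (\<forall>i\<in>I. d (Q i w) (Q (jstar w) w) \<le> ennreal (2 * eps_star d (\<lambda>j. Q j w) m)))"
        using median[OF w] unfolding metric_median_index_def d_def .
      from mw have js: "jstar w \<in> {1..m}" by (rule conjunct1)
      from mw obtain I where I: "I \<subseteq> {1..m}"
        and cI: "real (card I) > real m / 2"
        and dI: "\<forall>i\<in>I. d (Q i w) (Q (jstar w) w) \<le> ennreal (2 * eps_star d (\<lambda>j. Q j w) m)"
        by blast
      have "C \<inter> I \<noteq> {}"
      proof
        assume e: "C \<inter> I = {}"
        have finI: "finite I" using I finite_subset by blast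
        have "card (C \<union> I) = card C + card I" using e finC finI by (simp add: card_Un_disjoint)
        moreover have "card (C \<union> I) \<le> m"
          using card_mono[of "{1..m}" "C \<union> I"] C_sub I by simp
        ultimately show False using cC cI by linarith
      qed
      then obtain i where iC: "i \<in> C" and iI: "i \<in> I" by blast
      have "d (Q i w) (Q (jstar w) w) \<le> ennreal (2 * eps_star d (\<lambda>j. Q j w) m)" using dI iI by blast
      also have "\<dots> \<le> ennreal (2 * \<epsilon>)" using es by (simp add: ennreal_leI)
      finally have dij: "d (Q i w) (Q (jstar w) w) \<le> ennreal (2 * \<epsilon>)" .
      have iM: "i \<in> {1..m}" using iC C_sub by auto
      have "H.F (Q (jstar w) w) \<le> ennreal (2 * \<epsilon>) + ennreal \<epsilon>"
        by (rule H.W_tri[OF Qs[OF iM w] Qs[OF js w] dij[unfolded d_def] closeC[OF iC]]) simp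
      also have "\<dots> = ennreal (3 * \<epsilon>)" using eps by (simp add: ennreal_plus[symmetric] del: ennreal_plus)
      finally have "d (Q (jstar w) w) (return T t0) \<le> ennreal (3 * \<epsilon>)" using dd[OF js w] by simp
      then show False using bad by simp
    qed
  qed

  have outer: "outer_prob M E \<le> P.prob A"
    unfolding outer_prob_def
  proof (rule cINF_lower)
    show "A \<in> {A \<in> sets M. E \<inter> space M \<subseteq> A}" using As EA by auto
    show "bdd_below (measure M ` {A \<in> sets M. E \<inter> space M \<subseteq> A})"
      by (rule bdd_belowI2[where m=0]) simp
  qed

  define \<alpha> where "\<alpha> = (1/2 - \<kappa>) / (1 - \<kappa>)"
  define r where "r = 3 * \<alpha> / (1 - \<alpha>)"
  have kp1: "1 - \<kappa> > 0" using kappa by simp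
  have a1: "\<alpha> \<ge> 1/4"
  proof -
    have "1/4 * (1 - \<kappa>) \<le> 1/2 - \<kappa>" using kappa by simp
    then show ?thesis unfolding \<alpha>_def using kp1 by (simp add: pos_le_divide_eq)
  qed
  have a2: "\<alpha> \<le> 1/2"
  proof -
    have "1/2 - \<kappa> \<le> 1/2 * (1 - \<kappa>)" using kappa by simp
    then show ?thesis unfolding \<alpha>_def using kp1 by (simp add: pos_divide_le_eq)
  qed
  have r1: "r \<ge> 1"
  proof -
    have "1 - \<alpha> \<le> 3 * \<alpha>" using a1 by simp
    then show ?thesis unfolding r_def using a2 by (simp add: le_divide_eq)
  qed
  have rp: "r > 0" using r1 by simp

  define Yf where "Yf mu = (if ennreal \<epsilon> < H.F mu then r else 1)" for mu
  define Y where "Y j w = Yf (Q j w)" for j w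
  have Yfm: "Yf \<in> borel_measurable (prob_algebra T)"
    unfolding Yf_def using H.F_meas by measurable
  have indY: "P.indep_vars (\<lambda>_. borel) Y G"
    unfolding Y_def
    by (rule P.indep_vars_compose2[OF P.indep_vars_subset[OF indep G_sub]]) (rule Yfm)
  have Ym: "\<And>j. j \<in> G \<Longrightarrow> Y j \<in> borel_measurable M"
    unfolding Y_def by (rule measurable_compose[OF Qm Yfm]) (use G_sub in auto)
  have Ybd: "\<And>j w. \<bar>Y j w\<bar> \<le> r" "\<And>j w. Y j w \<ge> 0"
    unfolding Y_def Yf_def using r1 by auto
  have intY: "\<And>j. j \<in> G \<Longrightarrow> integrable M (Y j)"
    by (rule P.integrable_const_bound[where B=r]) (use Ybd Ym in auto)
  have Yeq: "\<And>j w. j \<in> G \<Longrightarrow> w \<in> space M \<Longrightarrow> Y j w = 1 + (r - 1) * indicator (B j) w"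
    unfolding Y_def Yf_def B_def by (auto simp: indicator_def)
  have EY: "\<And>j. j \<in> G \<Longrightarrow> (\<integral>w. Y j w \<partial>M) \<le> 1 + (r - 1) / 4"
  proof -
    fix j assume j: "j \<in> G"
    have Bj: "B j \<in> sets M" using Bs G_sub j by auto
    have ii: "integrable M (indicator (B j) :: 'w \<Rightarrow> real)"
      by (rule integrable_real_indicator[OF Bj]) (simp add: P.emeasure_finite less_top[symmetric])
    have e1: "(\<integral>w. Y j w \<partial>M) = (\<integral>w. 1 + (r - 1) * indicator (B j) w \<partial>M)"
      by (rule Bochner_Integration.integral_cong) (use Yeq j in auto)
    have e2: "(\<integral>w. 1 + (r - 1) * indicator (B j) w \<partial>M) = (\<integral>w. 1 \<partial>M) + (\<integral>w. (r - 1) * indicator (B j) w \<partial>M)"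
      by (rule Bochner_Integration.integral_add) (use ii in simp_all)
    have e3: "(\<integral>w. (r - 1) * indicator (B j) w \<partial>M) = (r - 1) * P.prob (B j)"
      using Bj by (simp add: Int_absorb2 sets.sets_into_space)
    have e4: "(\<integral>w. 1 \<partial>M) = (1::real)" by (simp add: P.prob_space)
    have "(\<integral>w. Y j w \<partial>M) = 1 + (r - 1) * P.prob (B j)" using e1 e2 e3 e4 by simp
    also have "\<dots> \<le> 1 + (r - 1) * (1/4)"
    proof -
      have "(r - 1) * P.prob (B j) \<le> (r - 1) * (1/4)" by (rule mult_left_mono) (use PB[OF j] r1 in simp_all)
      then show ?thesis by simp
    qed
    finally show "(\<integral>w. Y j w \<partial>M) \<le> 1 + (r - 1) / 4" by simp
  qed
  have prodE: "(\<integral>w. (\<Prod>j\<in>G. Y j w) \<partial>M) \<le> (1 + (r - 1) / 4) ^ n"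
  proof -
    have "(\<integral>w. (\<Prod>j\<in>G. Y j w) \<partial>M) = (\<Prod>j\<in>G. \<integral>w. Y j w \<partial>M)"
      by (rule P.indep_vars_lebesgue_integral[OF finG indY intY])
    also have "\<dots> \<le> (\<Prod>j\<in>G. 1 + (r - 1) / 4)"
      by (rule prod_mono) (use EY Ybd in \<open>auto intro: integral_nonneg\<close>)
    also have "\<dots> = (1 + (r - 1) / 4) ^ n" unfolding n_def by simp
    finally show ?thesis .
  qed
  have intP: "integrable M (\<lambda>w. \<Prod>j\<in>G. Y j w)"
    by (rule P.indep_vars_integrable[OF finG indY intY])
  have pw: "\<And>w. w \<in> space M \<Longrightarrow> indicator A w \<le> r powr (- (real n - real m / 2)) * (\<Prod>j\<in>G. Y j w)"
  proof -
    fix w assume w: "w \<in> space M"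
    have Yif: "\<And>j. j \<in> G \<Longrightarrow> Y j w = (if w \<in> B j then r else 1)"
      using Yeq w by (auto simp: indicator_def)
    have "(\<Prod>j\<in>G. Y j w) = (\<Prod>j\<in>G. (if w \<in> B j then r else 1))"
      by (rule prod.cong) (simp_all add: Yif)
    also have "\<dots> = r ^ card (G \<inter> {j. w \<in> B j})"
      by (simp add: prod.If_cases[OF finG])
    also have "G \<inter> {j. w \<in> B j} = {j \<in> G. w \<in> B j}" by auto
    finally have pe: "(\<Prod>j\<in>G. Y j w) = r ^ card {j \<in> G. w \<in> B j}" .
    show "indicator A w \<le> r powr (- (real n - real m / 2)) * (\<Prod>j\<in>G. Y j w)"
    proof (cases "w \<in> A")
      case True
      then have k: "real n - real m / 2 \<le> real (card {j \<in> G. w \<in> B j})"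
        unfolding A_def sum_card by simp
      have "r powr (- (real n - real m / 2)) * (\<Prod>j\<in>G. Y j w)
          = r powr (- (real n - real m / 2)) * r powr real (card {j \<in> G. w \<in> B j})"
        unfolding pe using rp by (simp add: powr_realpow)
      also have "\<dots> = r powr (real (card {j \<in> G. w \<in> B j}) - (real n - real m / 2))"
        by (simp add: powr_add[symmetric] algebra_simps)
      finally have "r powr (- (real n - real m / 2)) * (\<Prod>j\<in>G. Y j w) \<ge> 1"
        using ge_one_powr_ge_zero[OF r1] k by simp
      then show ?thesis using True by simp
    next
      case False
      have "0 \<le> r powr (- (real n - real m / 2)) * (\<Prod>j\<in>G. Y j w)"
        using Ybd by (simp add: prod_nonneg)
      then show ?thesis using False by simp
    qed
  qed
  have "P.prob A = (\<integral>w. indicator A w \<partial>M)" using As by simp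
  also have "\<dots> \<le> (\<integral>w. r powr (- (real n - real m / 2)) * (\<Prod>j\<in>G. Y j w) \<partial>M)"
    by (rule integral_mono) (use As P.emeasure_finite intP pw in \<open>auto simp: less_top[symmetric]\<close>)
  also have "\<dots> = r powr (- (real n - real m / 2)) * (\<integral>w. (\<Prod>j\<in>G. Y j w) \<partial>M)" by simp
  also have "\<dots> \<le> r powr (- (real n - real m / 2)) * (1 + (r - 1) / 4) ^ n"
    using prodE by (simp add: mult_left_mono)
  also have "\<dots> \<le> (exp ((1 - \<kappa>) * psi \<alpha> (1/4))) powr (- real m)"
    unfolding r_def \<alpha>_def by (rule chernoff_arith[OF kappa nc])
  finally have "P.prob A \<le> (exp ((1 - \<kappa>) * psi \<alpha> (1/4))) powr (- real m)" .
  then show ?thesis using outer unfolding E_def d_def \<alpha>_def by simp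
qed

end
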